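(* Let $K$ be a field and let $A$ be a finitely generated $K$-algebra of finite GK dimension, and let $V$ be a finite-dimensional $K$-subspace of $A$ that contains $1$ and generates $A$ as a $K$-algebra. Then there is a constant $C>0$ such that $$\dim_K(V^n)\;>\;C\,n\,\dim_K(V^{n+1}/V^n)$$ for infinitely many positive integers $n$.
   Context: $V^n$ denotes the $K$-linear span of all products of $n$ elements of $V$; since $1\in V$, $V^n\subseteq V^{n+1}$. $\mathrm{GKdim}(A)=\limsup_{n\to\infty}\log\dim_K(V^n)/\log n$. *)

theory Defs
  imports Complex_Main "HOL-Library.Liminf_Limsup" "HOL-Library.Extended_Real"
begin

definition algebra_over :: "('k::field \<Rightarrow> 'a::ring_1 \<Rightarrow> 'a) \<Rightarrow> bool" where
  "algebra_over scale \<longleftrightarrow> vector_space scale \<and>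
     (\<forall>c x y. scale c (x * y) = scale c x * y) \<and>
     (\<forall>c x y. scale c (x * y) = x * scale c y)"

definition subalgebra :: "('k::field \<Rightarrow> 'a::ring_1 \<Rightarrow> 'a) \<Rightarrow> 'a set \<Rightarrow> bool" where
  "subalgebra scale B \<longleftrightarrow> module.subspace scale B \<and> 1 \<in> B \<and> (\<forall>x\<in>B. \<forall>y\<in>B. x * y \<in> B)"

definition gen_subalgebra :: "('k::field \<Rightarrow> 'a::ring_1 \<Rightarrow> 'a) \<Rightarrow> 'a set \<Rightarrow> 'a set" where
  "gen_subalgebra scale S = \<Inter>{B. subalgebra scale B \<and> S \<subseteq> B}"

definition Vpow :: "('k::field \<Rightarrow> 'a::ring_1 \<Rightarrow> 'a) \<Rightarrow> 'a set \<Rightarrow> nat \<Rightarrow> 'a set" where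
  "Vpow scale V n = module.span scale {prod_list xs | xs. length xs = n \<and> set xs \<subseteq> V}"

definition fin_dim_subspace :: "('k::field \<Rightarrow> 'a::ring_1 \<Rightarrow> 'a) \<Rightarrow> 'a set \<Rightarrow> bool" where
  "fin_dim_subspace scale V \<longleftrightarrow> module.subspace scale V \<and> (\<exists>B. finite B \<and> module.span scale B = V)"

definition GKdim_wrt :: "('k::field \<Rightarrow> 'a::ring_1 \<Rightarrow> 'a) \<Rightarrow> 'a set \<Rightarrow> ereal" where
  "GKdim_wrt scale V = limsup (\<lambda>n. ereal (ln (real (vector_space.dim scale (Vpow scale V n))) / ln (real n)))"

end

theory Submission
  imports Defs
begin


lemma poch_ge_pow:
  fixes a :: real assumes "a \<ge> 0" shows "a ^ k \<le> pochhammer a k"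
proof (induction k)
  case 0 then show ?case by simp
next
  case (Suc k)
  have "a ^ Suc k = a * a ^ k" by simp
  also have "\<dots> \<le> (a + of_nat k) * pochhammer a k"
    using Suc assms by (intro mult_mono) auto
  finally show ?case by (simp add: pochhammer_rec')
qed

lemma poch_step:
  fixes a :: real shows "a * pochhammer (a + 1) k = (a + of_nat k) * pochhammer a k"
  by (metis pochhammer_rec pochhammer_rec')

lemma growth:
  fixes d :: "nat \<Rightarrow> real"
  assumes pos: "\<And>n. d n \<ge> 1"
    and gk: "limsup (\<lambda>n. ereal (ln (d n) / ln (real n))) < \<infinity>"
  shows "\<exists>C::real. C > 0 \<and> infinite {n::nat. n > 0 \<and> d n > C * real n * (d (Suc n) - d n)}"
proof -
  obtain M :: real where M: "limsup (\<lambda>n. ereal (ln (d n) / ln (real n))) < ereal M"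
  proof (cases "limsup (\<lambda>n. ereal (ln (d n) / ln (real n)))")
    case (real r) then show ?thesis using that[of "r+1"] by auto
  next
    case PInf then show ?thesis using gk by auto
  next
    case MInf then show ?thesis using that[of 0] by auto
  qed
  have "eventually (\<lambda>n. ereal (ln (d n) / ln (real n)) < ereal M) sequentially"
    using Limsup_lessD[OF M] .
  then obtain N0 where N0: "\<And>n. n \<ge> N0 \<Longrightarrow> ln (d n) / ln (real n) < M"
    unfolding eventually_sequentially by auto
  define k :: nat where "k = nat (ceiling M) + 1"
  have kM: "real k \<ge> M + 1" unfolding k_def by linarith
  define C :: real where "C = 1 / real k"
  have Cpos: "C > 0" unfolding C_def k_def by simp
  show ?thesis
  proof (rule exI[of _ C], rule conjI[OF Cpos], rule notI)
    assume fin: "finite {n::nat. n > 0 \<and> d n > C * real n * (d (Suc n) - d n)}"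
    then obtain N1 where N1: "{n::nat. n > 0 \<and> d n > C * real n * (d (Suc n) - d n)} \<subseteq> {..<N1}"
      using finite_nat_bounded by blast
    define N where "N = max N1 1"
    have rec: "d (Suc n) * real n \<ge> d n * (real n + real k)" if "n \<ge> N" for n
    proof -
      have "n > 0" "n \<ge> N1" using that unfolding N_def by auto
      then have "\<not> d n > C * real n * (d (Suc n) - d n)" using N1 by force
      then have "d n \<le> real n * (d (Suc n) - d n) / real k" unfolding C_def by simp
      then have "d n * real k \<le> real n * (d (Suc n) - d n)"
        unfolding k_def by (simp add: field_simps)
      then show ?thesis by (simp add: algebra_simps)
    qed
    define P where "P n = pochhammer (real n) k" for n
    have Ppos: "P n > 0" if "n > 0" for n unfolding P_def using that by (auto intro!: pochhammer_pos)
    have main: "d n * P N \<ge> d N * P n" if "n \<ge> N" for n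
      using that
    proof (induction n rule: dec_induct)
      case base then show ?case by simp
    next
      case (step n)
      have n0: "real n > 0" using step(1) unfolding N_def by auto
      have PN: "P N > 0" using Ppos[of N] unfolding N_def by auto
      have st: "real n * P (Suc n) = (real n + real k) * P n"
        unfolding P_def using poch_step[of "real n" k] by (simp add: add.commute)
      have A: "(d n * (real n + real k)) * P N \<le> (d (Suc n) * real n) * P N"
        using rec[OF step(1)] PN by (intro mult_right_mono) auto
      have B: "(real n + real k) * (d N * P n) \<le> (real n + real k) * (d n * P N)"
        using step(3) by (intro mult_left_mono) auto
      have "real n * (d N * P (Suc n)) = (real n + real k) * (d N * P n)"
        using arg_cong[OF st, of "\<lambda>t. d N * t"] by (simp add: algebra_simps)
      also have "\<dots> \<le> (real n + real k) * (d n * P N)" by (rule B)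
      also have "\<dots> = (d n * (real n + real k)) * P N" by simp
      also have "\<dots> \<le> (d (Suc n) * real n) * P N" by (rule A)
      also have "\<dots> = real n * (d (Suc n) * P N)" by simp
      finally have "real n * (d N * P (Suc n)) \<le> real n * (d (Suc n) * P N)" .
      then show ?case using n0 by simp
    qed
    define n where "n = max (max N N0) (nat (ceiling (P N))) + 2"
    have nN: "n \<ge> N" "n \<ge> N0" "real n > P N" "n \<ge> 2" unfolding n_def by linarith+
    have ln_pos: "ln (real n) > 0" using nN(4) by simp
    have "ln (d n) < M * ln (real n)" using N0[OF nN(2)] ln_pos by (simp add: field_simps)
    then have dn: "d n < real n powr M"
    proof -
      assume h: "ln (d n) < M * ln (real n)"
      have "d n = exp (ln (d n))" using pos[of n] by simp
      also have "\<dots> < exp (M * ln (real n))" using h by simp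
      also have "\<dots> = real n powr M" using nN(4) by (simp add: powr_def)
      finally show ?thesis .
    qed
    have "real n * real n powr M = real n powr (M + 1)"
      using nN(4) by (simp add: powr_add)
    also have "\<dots> \<le> real n powr real k" using kM nN(4) by (intro powr_mono) auto
    also have "\<dots> = real n ^ k" using nN(4) by (simp add: powr_realpow)
    also have "\<dots> \<le> P n" unfolding P_def by (rule poch_ge_pow) simp
    also have "\<dots> \<le> d N * P n" using pos[of N] Ppos[of n] nN(4) by (simp add: mult_le_cancel_right1)
    also have "\<dots> \<le> d n * P N" using main[OF nN(1)] .
    finally have "real n * real n powr M \<le> d n * P N" .
    moreover have "d n * P N < real n powr M * real n"
    proof -
      have "P N > 0" using Ppos[of N] unfolding N_def by auto
      then have "d n * P N < real n powr M * P N" using dn by simp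
      also have "\<dots> < real n powr M * real n" using nN(3) nN(4) by (intro mult_strict_left_mono) auto
      finally show ?thesis .
    qed
    ultimately show False by (simp add: mult.commute)
  qed
qed


lemma mult_span:
  fixes scale :: "'k::field \<Rightarrow> 'a::ring_1 \<Rightarrow> 'a"
  assumes alg: "algebra_over scale"
    and x: "x \<in> module.span scale S" and y: "y \<in> module.span scale T"
  shows "x * y \<in> module.span scale {a * b | a b. a \<in> S \<and> b \<in> T}"
proof -
  interpret vector_space scale using alg unfolding algebra_over_def by auto
  have l: "scale c (u * v) = scale c u * v" for c u v using alg unfolding algebra_over_def by auto
  have r: "scale c (u * v) = u * scale c v" for c u v using alg unfolding algebra_over_def by auto
  let ?W = "{a * b | a b. a \<in> S \<and> b \<in> T}"
  have base: "a * y \<in> span ?W" if a: "a \<in> S" for a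
    using y
  proof (induction rule: span_induct_alt)
    case base then show ?case by (simp add: span_zero)
  next
    case (step c b z)
    have "a * (scale c b + z) = scale c (a * b) + a * z" by (simp add: distrib_left r)
    moreover have "a * b \<in> span ?W" using a step(1) by (intro span_base) blast
    ultimately show ?case using step(2) by (simp add: span_add span_scale)
  qed
  show ?thesis using x
  proof (induction rule: span_induct_alt)
    case base then show ?case by (simp add: span_zero)
  next
    case (step c a z)
    have "(scale c a + z) * y = scale c (a * y) + z * y" by (simp add: distrib_right l)
    then show ?case using step base by (simp add: span_add span_scale)
  qed
qed

lemma prod_list_span:
  fixes scale :: "'k::field \<Rightarrow> 'a::ring_1 \<Rightarrow> 'a"
  assumes alg: "algebra_over scale"
  shows "set xs \<subseteq> module.span scale B \<Longrightarrow>
    prod_list xs \<in> module.span scale {prod_list ys | ys. length ys = length xs \<and> set ys \<subseteq> B}"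
proof (induction xs)
  case Nil
  interpret vector_space scale using alg unfolding algebra_over_def by auto
  show ?case by (intro span_base) auto
next
  case (Cons x xs)
  interpret vector_space scale using alg unfolding algebra_over_def by auto
  let ?W = "{prod_list ys | ys. length ys = length xs \<and> set ys \<subseteq> B}"
  have "x * prod_list xs \<in> span {a * b | a b. a \<in> B \<and> b \<in> ?W}"
    using Cons by (intro mult_span[OF alg]) auto
  also have "\<dots> \<subseteq> span {prod_list ys | ys. length ys = length (x # xs) \<and> set ys \<subseteq> B}"
  proof (rule span_mono, safe)
    fix a ys assume "a \<in> B" "length ys = length xs" "set ys \<subseteq> B"
    then show "\<exists>zs. a * prod_list ys = prod_list zs \<and> length zs = length (x # xs) \<and> set zs \<subseteq> B"
      by (intro exI[of _ "a # ys"]) auto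
  qed
  finally show ?case by simp
qed

lemma dim_pos:
  fixes scale :: "'k::field \<Rightarrow> 'a::ring_1 \<Rightarrow> 'a"
  assumes alg: "algebra_over scale"
    and finV: "fin_dim_subspace scale V"
    and one: "1 \<in> V"
  shows "vector_space.dim scale (Vpow scale V n) \<ge> 1"
proof -
  interpret vector_space scale using alg unfolding algebra_over_def by auto
  obtain Bf where Bf: "finite Bf" "span Bf = V" using finV unfolding fin_dim_subspace_def by auto
  let ?W = "{prod_list ys | ys. length ys = n \<and> set ys \<subseteq> Bf}"
  have finW: "finite ?W"
  proof -
    have "?W = prod_list ` {ys. set ys \<subseteq> Bf \<and> length ys = n}" by auto
    then show ?thesis using finite_lists_length_eq[OF Bf(1)] by simp
  qed
  have sub: "Vpow scale V n \<subseteq> span ?W"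
    unfolding Vpow_def
  proof (rule span_minimal[OF _ subspace_span], rule subsetI)
    fix x assume "x \<in> {prod_list xs | xs. length xs = n \<and> set xs \<subseteq> V}"
    then obtain xs where xs: "x = prod_list xs" "length xs = n" "set xs \<subseteq> V" by blast
    then show "x \<in> span ?W" using prod_list_span[OF alg, of xs Bf] Bf(2) by auto
  qed
  have one_in: "1 \<in> Vpow scale V n"
    unfolding Vpow_def by (intro span_base CollectI exI[of _ "replicate n 1"]) (auto simp: one)
  obtain B where B: "B \<subseteq> Vpow scale V n" "independent B" "Vpow scale V n \<subseteq> span B"
      "card B = dim (Vpow scale V n)"
    using basis_exists by blast
  have "finite B" using independent_span_bound[OF finW B(2)] B(1) sub by auto
  show ?thesis
  proof (rule ccontr)
    assume "\<not> ?thesis"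
    then have "card B = 0" using B(4) by simp
    then have "B = {}" using \<open>finite B\<close> by simp
    then show False using one_in B(3) by auto
  qed
qed

theorem lemma2p4:
  fixes scale :: "'k::field \<Rightarrow> 'a::ring_1 \<Rightarrow> 'a"
    and V :: "'a set"
  assumes alg: "algebra_over scale"
    and finV: "fin_dim_subspace scale V"
    and one: "1 \<in> V"
    and gen: "gen_subalgebra scale V = UNIV"
    and gk: "GKdim_wrt scale V < \<infinity>"
  shows "\<exists>C::real. C > 0 \<and>
    infinite {n::nat. n > 0 \<and>
      real (vector_space.dim scale (Vpow scale V n)) >
        C * real n * (real (vector_space.dim scale (Vpow scale V (Suc n)))
                      - real (vector_space.dim scale (Vpow scale V n)))}"
proof -
  let ?d = "\<lambda>n. real (vector_space.dim scale (Vpow scale V n))"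
  have "\<And>n. ?d n \<ge> 1" using dim_pos[OF alg finV one] by simp
  moreover have "limsup (\<lambda>n. ereal (ln (?d n) / ln (real n))) < \<infinity>"
    using gk unfolding GKdim_wrt_def .
  ultimately show ?thesis by (rule growth)
qed

end
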